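(* Let $V$ be a finite set with $|V|\ge2$, let $A$ be a real symmetric matrix indexed by $V$, and let $(X,Y)$ be a separation of $A$ such that for each $Z\in\{X,Y\}$ property (P) holds: for all $u\in Z\setminus(X\cap Y)$ and $s\in X\cap Y$, either $A_{su}>\min A$ or there exists a weighted chordless walk from $u$ to $s$ in $A[Z]$ internally vertex-disjoint from $X\cap Y$. Assume that every proper principal submatrix $A[U]$ ($U\subsetneq V$, $|U|\ge2$) satisfies (A) or (B), where for a matrix $B$ indexed by $U$: (A) means $B$ has a critical walk, and (B) means $B$ has two distinct simplicial vertices $u,v$ with $B_{uv}=\min B$. Then each $Z\in\{X,Y\}$ satisfies at least one of: (P1) $A[Z]$ has a simplicial vertex belonging to $Z\setminus(X\cap Y)$; (P2) there is a weighted chordless walk in $A[Z]$ which is rooted in $X\cap Y$.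
   Context: For a symmetric matrix $B$ indexed by $U$, $\min B=\min\{B_{xy}:x\ne y\in U\}$; $A[Z]$ is the principal submatrix indexed by $Z$. A separation of $A$ is a pair $(X,Y)$ of subsets of $V$ with $X\cup Y=V$, $X\setminus Y\ne\emptyset$, $Y\setminus X\neq\emptyset$ and $A_{xy}=\min A$ for all $x\in X\setminus Y$, $y\in Y\setminus X$. $v$ is simplicial in $B$ if $B_{yz}\ge\min\{B_{vy},B_{vz}\}$ for all distinct $y,z\in U\setminus\{v\}$. A walk is $W=(v_0,\dots,v_p)$ ($p\ge1$), from $v_0$ to $v_p$, with internal elements $I(W)=\{v_1,\dots,v_{p-1}\}$; it is closed if $v_0=v_p$; internally vertex-disjoint from $S$ if $I(W)\cap S=\emptyset$. $W$ is weighted chordless in $B$ if $B_{v_{i-1}v_{i+1}}<\min\{B_{v_{i-1}v_i},B_{v_{i+1}v_i}\}$ for $1\le i\le p-1$. A critical walk of $B$ is a closed weighted chordless walk in $B$ whose end point $v_0$ is simplicial in $B$ and for which some $u\in I(W)$ has $B_{v_0u}=\min B$. A walk is rooted in $S$ if its end points belong to $S$, its internal elements belong to the complement of $S$, and $I(W)\ne\emptyset$. *)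

theory Defs
  imports Complex_Main
begin

text \<open>A symmetric matrix indexed by a set U is represented by a function
  B :: 'a => 'a => real together with the index set U. The principal submatrix
  A[Z] is represented by the same function A with index set Z.\<close>

definition minmat :: "('a \<Rightarrow> 'a \<Rightarrow> real) \<Rightarrow> 'a set \<Rightarrow> real" where
  "minmat B U = Min {B x y | x y. x \<in> U \<and> y \<in> U \<and> x \<noteq> y}"

definition separation :: "('a \<Rightarrow> 'a \<Rightarrow> real) \<Rightarrow> 'a set \<Rightarrow> 'a set \<Rightarrow> 'a set \<Rightarrow> bool" where
  "separation A V X Y \<longleftrightarrow> X \<subseteq> V \<and> Y \<subseteq> V \<and> X \<union> Y = V \<and> X - Y \<noteq> {} \<and> Y - X \<noteq> {} \<and>
     (\<forall>x \<in> X - Y. \<forall>y \<in> Y - X. A x y = minmat A V)"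

definition simplicial :: "('a \<Rightarrow> 'a \<Rightarrow> real) \<Rightarrow> 'a set \<Rightarrow> 'a \<Rightarrow> bool" where
  "simplicial B U v \<longleftrightarrow> v \<in> U \<and>
     (\<forall>y \<in> U - {v}. \<forall>z \<in> U - {v}. y \<noteq> z \<longrightarrow> B y z \<ge> min (B v y) (B v z))"

definition walk_in :: "'a set \<Rightarrow> 'a list \<Rightarrow> bool" where
  "walk_in U W \<longleftrightarrow> length W \<ge> 2 \<and> set W \<subseteq> U"

definition internal :: "'a list \<Rightarrow> 'a set" where
  "internal W = set (butlast (tl W))"

definition closed_walk :: "'a list \<Rightarrow> bool" where
  "closed_walk W \<longleftrightarrow> hd W = last W"

definition weighted_chordless :: "('a \<Rightarrow> 'a \<Rightarrow> real) \<Rightarrow> 'a set \<Rightarrow> 'a list \<Rightarrow> bool" where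
  "weighted_chordless B U W \<longleftrightarrow> walk_in U W \<and>
     (\<forall>i. 1 \<le> i \<and> i < length W - 1 \<longrightarrow>
        B (W ! (i - 1)) (W ! (i + 1)) < min (B (W ! (i - 1)) (W ! i)) (B (W ! (i + 1)) (W ! i)))"

definition critical_walk :: "('a \<Rightarrow> 'a \<Rightarrow> real) \<Rightarrow> 'a set \<Rightarrow> 'a list \<Rightarrow> bool" where
  "critical_walk B U W \<longleftrightarrow> weighted_chordless B U W \<and> closed_walk W \<and>
     simplicial B U (hd W) \<and> (\<exists>u \<in> internal W. B (hd W) u = minmat B U)"

definition rooted_in :: "'a set \<Rightarrow> 'a set \<Rightarrow> 'a list \<Rightarrow> bool" where
  "rooted_in U S W \<longleftrightarrow> hd W \<in> S \<and> last W \<in> S \<and> internal W \<subseteq> U - S \<and> internal W \<noteq> {}"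

definition propA :: "('a \<Rightarrow> 'a \<Rightarrow> real) \<Rightarrow> 'a set \<Rightarrow> bool" where
  "propA B U \<longleftrightarrow> (\<exists>W. critical_walk B U W)"

definition propB :: "('a \<Rightarrow> 'a \<Rightarrow> real) \<Rightarrow> 'a set \<Rightarrow> bool" where
  "propB B U \<longleftrightarrow> (\<exists>u v. u \<noteq> v \<and> simplicial B U u \<and> simplicial B U v \<and> B u v = minmat B U)"

definition propP :: "('a \<Rightarrow> 'a \<Rightarrow> real) \<Rightarrow> 'a set \<Rightarrow> 'a set \<Rightarrow> 'a set \<Rightarrow> 'a set \<Rightarrow> bool" where
  "propP A V X Y Z \<longleftrightarrow> (\<forall>u \<in> Z - (X \<inter> Y). \<forall>s \<in> X \<inter> Y.
     A s u > minmat A V \<or>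
     (\<exists>W. weighted_chordless A Z W \<and> hd W = u \<and> last W = s \<and> internal W \<inter> (X \<inter> Y) = {}))"

end

theory Submission
  imports Defs
begin

definition chl :: "('a \<Rightarrow> 'a \<Rightarrow> real) \<Rightarrow> 'a list \<Rightarrow> bool" where
  "chl A W \<longleftrightarrow> (\<forall>xs a b c ys. W = xs @ [a,b,c] @ ys \<longrightarrow> A a c < min (A a b) (A c b))"

lemma decomp3:
  assumes "1 \<le> i" "i < length W - 1"
  shows "W = take (i-1) W @ [W!(i-1), W!i, W!(i+1)] @ drop (i+2) W"
proof -
  have d1: "drop (i-1) W = W!(i-1) # drop i W"
    using assms Cons_nth_drop_Suc[of "i-1" W] by simp
  have d2: "drop i W = W!i # drop (Suc i) W"
    using assms Cons_nth_drop_Suc[of i W] by simp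
  have d3: "drop (Suc i) W = W!(Suc i) # drop (Suc (Suc i)) W"
    using assms Cons_nth_drop_Suc[of "Suc i" W] by simp
  have "W = take (i-1) W @ drop (i-1) W" by simp
  also have "\<dots> = take (i-1) W @ [W!(i-1), W!i, W!(i+1)] @ drop (i+2) W"
    using d1 d2 d3 by simp
  finally show ?thesis .
qed

lemma wc_iff: "weighted_chordless A U W \<longleftrightarrow> walk_in U W \<and> chl A W"
proof
  assume h: "weighted_chordless A U W"
  show "walk_in U W \<and> chl A W"
  proof
    show "walk_in U W" using h unfolding weighted_chordless_def by simp
    show "chl A W" unfolding chl_def
    proof (intro allI impI)
      fix xs a b c ys assume e: "W = xs @ [a,b,c] @ ys"
      define i where "i = Suc (length xs)"
      have "1 \<le> i" "i < length W - 1" using e i_def by auto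
      then have "A (W ! (i - 1)) (W ! (i + 1)) < min (A (W ! (i - 1)) (W ! i)) (A (W ! (i + 1)) (W ! i))"
        using h unfolding weighted_chordless_def by blast
      moreover have "W ! (i-1) = a" "W ! i = b" "W ! (i+1) = c"
        using e i_def by (auto simp: nth_append)
      ultimately show "A a c < min (A a b) (A c b)" by simp
    qed
  qed
next
  assume h: "walk_in U W \<and> chl A W"
  show "weighted_chordless A U W" unfolding weighted_chordless_def
  proof (intro conjI allI impI)
    show "walk_in U W" using h by simp
    fix i assume i: "1 \<le> i \<and> i < length W - 1"
    then have "W = take (i-1) W @ [W!(i-1), W!i, W!(i+1)] @ drop (i+2) W"
      using decomp3 by blast
    then show "A (W ! (i - 1)) (W ! (i + 1)) < min (A (W ! (i - 1)) (W ! i)) (A (W ! (i + 1)) (W ! i))"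
      using h unfolding chl_def by blast
  qed
qed

lemma chl_append1: "chl A (xs @ ys) \<Longrightarrow> chl A xs"
  unfolding chl_def by (metis append.assoc)

lemma chl_append2: "chl A (xs @ ys) \<Longrightarrow> chl A ys"
  unfolding chl_def by (metis append.assoc)

lemma chl_Cons: "chl A (x # xs) \<Longrightarrow> chl A xs"
  using chl_append2[of A "[x]" xs] by simp

lemma internal_sub: "internal W \<subseteq> set W"
  unfolding internal_def by (cases W) (auto dest: in_set_butlastD)

lemma internal_del:
  "internal (xs @ [a,c] @ ys) \<subseteq> internal (xs @ [a,b,c] @ ys)"
  unfolding internal_def
  by (cases xs; cases ys rule: rev_cases) (auto simp: butlast_append)


lemma path_rooted:
  assumes sym: "\<forall>x\<in>Z. \<forall>y\<in>Z. A x y = A y x"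
  shows "successively (\<lambda>a b. m < A a b) Q \<Longrightarrow> set Q \<subseteq> Z \<Longrightarrow> length Q \<ge> 2 \<Longrightarrow>
    hd Q \<in> S \<Longrightarrow> last Q \<in> S \<Longrightarrow> internal Q \<subseteq> Z - S \<Longrightarrow> A (hd Q) (last Q) \<le> m \<Longrightarrow>
    \<exists>W. weighted_chordless A Z W \<and> rooted_in Z S W"
proof (induction "length Q" arbitrary: Q rule: less_induct)
  case less
  show ?case
  proof (cases "chl A Q")
    case True
    have ne: "internal Q \<noteq> {}"
    proof
      assume "internal Q = {}"
      then have "length (butlast (tl Q)) = 0" unfolding internal_def by simp
      then have "length Q \<le> 2" by simp
      with less.prems(3) obtain a b where Q: "Q = [a,b]"
        by (metis (no_types, opaque_lifting) One_nat_def Suc_1 le_antisym length_0_conv length_Suc_conv)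
      then show False using less.prems(1,7) by simp
    qed
    have "weighted_chordless A Z Q" using True less.prems unfolding wc_iff walk_in_def by simp
    moreover have "rooted_in Z S Q" using less.prems ne unfolding rooted_in_def by simp
    ultimately show ?thesis by blast
  next
    case False
    then obtain xs a b c ys where Q: "Q = xs @ [a,b,c] @ ys" and nc: "\<not> A a c < min (A a b) (A c b)"
      unfolding chl_def by blast
    have ab: "m < A a b" and bc: "m < A b c"
      using less.prems(1) unfolding Q by (auto simp: successively_append_iff)
    have "b \<in> Z" "c \<in> Z" using less.prems(2) Q by auto
    then have "A c b = A b c" using sym by auto
    with nc ab bc have ac: "m < A a c" by linarith
    define Q' where "Q' = xs @ [a,c] @ ys"
    have len: "length Q' < length Q" unfolding Q Q'_def by simp
    have s1: "successively (\<lambda>a b. m < A a b) Q'"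
      using less.prems(1) ac unfolding Q Q'_def by (auto simp: successively_append_iff)
    have s2: "set Q' \<subseteq> Z" using less.prems(2) unfolding Q Q'_def by auto
    have s3: "length Q' \<ge> 2" unfolding Q'_def by simp
    have hdq: "hd Q' = hd Q" unfolding Q Q'_def by (cases xs) auto
    have lq: "last Q' = last Q" unfolding Q Q'_def by (cases ys rule: rev_cases) auto
    have s6: "internal Q' \<subseteq> Z - S" using less.prems(6) internal_del[of xs a c ys b] unfolding Q Q'_def by blast
    show ?thesis
      using less.hyps[OF len s1 s2 s3] less.prems(4,5,7) s6 hdq lq by simp
  qed
qed

lemma seg:
  "chl A W \<Longrightarrow> set W \<subseteq> Z \<Longrightarrow> W \<noteq> [] \<Longrightarrow> hd W \<in> S \<Longrightarrow> last W \<in> S \<Longrightarrow> x \<in> set W \<Longrightarrow> x \<notin> S \<Longrightarrow>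
   \<exists>W'. weighted_chordless A Z W' \<and> rooted_in Z S W'"
proof (induction W)
  case Nil
  then show ?case by simp
next
  case (Cons a rest)
  have aS: "a \<in> S" using Cons.prems by simp
  have xr: "x \<in> set rest" using Cons.prems aS by auto
  then have rne: "rest \<noteq> []" by auto
  define p where "p = takeWhile (\<lambda>y. y \<notin> S) rest"
  define q where "q = dropWhile (\<lambda>y. y \<notin> S) rest"
  have rpq: "rest = p @ q" unfolding p_def q_def by simp
  have lr: "last rest \<in> S" using Cons.prems(5) rne by simp
  have pS: "\<forall>y\<in>set p. y \<notin> S" unfolding p_def by (auto dest: set_takeWhileD)
  have qne: "q \<noteq> []"
  proof
    assume "q = []"
    then have "rest = p" using rpq by simp
    then have "last rest \<in> set p" using rne last_in_set by metis
    with lr pS show False by blast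
  qed
  then obtain b q' where q: "q = b # q'" by (cases q) auto
  have "\<not> (hd q \<notin> S)" using hd_dropWhile[of "\<lambda>y. y \<notin> S" rest] qne unfolding q_def by blast
  then have bS: "b \<in> S" using q by simp
  show ?case
  proof (cases "p = []")
    case True
    then have r: "rest = b # q'" using rpq q by simp
    show ?thesis
    proof (rule Cons.IH)
      show "chl A rest" by (rule chl_Cons[OF Cons.prems(1)])
      show "set rest \<subseteq> Z" using Cons.prems(2) by simp
      show "rest \<noteq> []" by fact
      show "hd rest \<in> S" using r bS by simp
      show "last rest \<in> S" by fact
      show "x \<in> set rest" by fact
      show "x \<notin> S" by fact
    qed
  next
    case False
    define W' where "W' = a # p @ [b]"
    have "a # rest = W' @ q'" unfolding W'_def using rpq q by simp
    then have c: "chl A W'" using Cons.prems(1) chl_append1 by metis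
    have st: "set W' \<subseteq> Z" using Cons.prems(2) rpq q unfolding W'_def by auto
    have "weighted_chordless A Z W'" unfolding wc_iff walk_in_def using c st False
      unfolding W'_def by simp
    moreover have "rooted_in Z S W'"
    proof -
      have i: "internal W' = set p" unfolding W'_def internal_def by simp
      have "set p \<subseteq> Z" using Cons.prems(2) rpq by auto
      then have "internal W' \<subseteq> Z - S" using i pS by blast
      moreover have "internal W' \<noteq> {}" using i False by simp
      ultimately show ?thesis unfolding rooted_in_def W'_def using aS bS by simp
    qed
    ultimately show ?thesis by blast
  qed
qed


lemma rtp_path:
  assumes "E\<^sup>*\<^sup>* x y" "x \<in> T" "\<And>a b. E a b \<Longrightarrow> b \<in> T \<and> m < A a b"
  shows "\<exists>P. P \<noteq> [] \<and> hd P = x \<and> last P = y \<and> set P \<subseteq> T \<and> successively (\<lambda>a b. m < A a b) P"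
  using assms(1)
proof (induction rule: rtranclp_induct)
  case base
  then show ?case using assms(2) by (intro exI[of _ "[x]"]) simp
next
  case (step y z)
  then obtain P where P: "P \<noteq> []" "hd P = x" "last P = y" "set P \<subseteq> T"
    "successively (\<lambda>a b. m < A a b) P" by blast
  have "z \<in> T" "m < A y z" using assms(3)[OF step(2)] by auto
  then show ?case using P
    by (intro exI[of _ "P @ [z]"]) (auto simp: successively_append_iff)
qed

lemma rtp_sym:
  assumes "E\<^sup>*\<^sup>* x y" "\<And>a b. E a b \<Longrightarrow> E b a"
  shows "E\<^sup>*\<^sup>* y x"
  using assms(1)
proof (induction rule: rtranclp_induct)
  case base
  then show ?case by simp
next
  case (step y z)
  then show ?case using assms(2) by (meson converse_rtranclp_into_rtranclp)
qed

lemma minmat_le: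
  assumes "finite Z" "x \<in> Z" "y \<in> Z" "x \<noteq> y"
  shows "minmat A Z \<le> A x y"
proof -
  have "{A x y | x y. x \<in> Z \<and> y \<in> Z \<and> x \<noteq> y} \<subseteq> (\<lambda>(x,y). A x y) ` (Z \<times> Z)" by auto
  then have "finite {A x y | x y. x \<in> Z \<and> y \<in> Z \<and> x \<noteq> y}"
    using assms(1) finite_subset by blast
  then show ?thesis unfolding minmat_def using assms by (intro Min_le) auto
qed

lemma main:
  "finite Z \<Longrightarrow> (\<forall>U. U \<subseteq> Z \<and> card U \<ge> 2 \<longrightarrow> propA A U \<or> propB A U) \<Longrightarrow>
   (\<forall>x\<in>Z. \<forall>y\<in>Z. A x y = A y x) \<Longrightarrow> S \<subseteq> Z \<Longrightarrow> Z - S \<noteq> {} \<Longrightarrow>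
   (\<exists>v\<in>Z - S. simplicial A Z v) \<or> (\<exists>W. weighted_chordless A Z W \<and> rooted_in Z S W)"
proof (induction "card Z" arbitrary: Z S rule: less_induct)
  case less
  note fin = less.prems(1) and HH = less.prems(2) and sym = less.prems(3)
    and SZ = less.prems(4) and TN = less.prems(5)
  obtain w0 where w0: "w0 \<in> Z - S" using TN by blast
  show ?case
  proof (cases "card Z \<ge> 2")
    case False
    then have "card Z \<le> Suc 0" by simp
    then have one: "\<forall>a\<in>Z. \<forall>b\<in>Z. a = b" using card_le_Suc0_iff_eq[OF fin] by blast
    have "simplicial A Z w0" unfolding simplicial_def using w0 one by blast
    then show ?thesis using w0 by blast
  next
    case True
    note c2 = True
    define m where "m = minmat A Z"
    have mle: "\<And>x y. x \<in> Z \<Longrightarrow> y \<in> Z \<Longrightarrow> x \<noteq> y \<Longrightarrow> m \<le> A x y"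
      unfolding m_def by (rule minmat_le[OF fin])
    define T where "T = Z - S"
    define E where "E = (\<lambda>x y. x \<in> T \<and> y \<in> T \<and> m < A x y)"
    define C where "C = {y. E\<^sup>*\<^sup>* w0 y}"
    define N where "N = {s \<in> S. \<exists>c\<in>C. m < A c s}"
    define U where "U = C \<union> N"
    have Ereach: "\<And>a b. E a b \<Longrightarrow> b \<in> T \<and> m < A a b" unfolding E_def by simp
    have Esym: "\<And>a b. E a b \<Longrightarrow> E b a" unfolding E_def using sym T_def by auto
    have CT: "C \<subseteq> T"
    proof
      fix y assume "y \<in> C"
      then have "E\<^sup>*\<^sup>* w0 y" unfolding C_def by simp
      then show "y \<in> T"
        by (induction rule: rtranclp_induct) (use w0 T_def Ereach in auto)
    qed
    have w0C: "w0 \<in> C" unfolding C_def by simp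
    have Cclos: "\<And>c y. c \<in> C \<Longrightarrow> y \<in> T \<Longrightarrow> m < A c y \<Longrightarrow> y \<in> C"
    proof -
      fix c y assume "c \<in> C" "y \<in> T" "m < A c y"
      then have "E\<^sup>*\<^sup>* w0 c" "E c y" using CT unfolding C_def E_def by auto
      then show "y \<in> C" unfolding C_def by simp
    qed
    have NS: "N \<subseteq> S" unfolding N_def by auto
    have UZ: "U \<subseteq> Z" unfolding U_def using CT NS SZ T_def by auto
    have UN: "U - N = C" unfolding U_def using CT NS T_def by auto
    have tsimp: "\<And>v. v \<in> C \<Longrightarrow> simplicial A U v \<Longrightarrow> simplicial A Z v"
    proof -
      fix v assume vC: "v \<in> C" and sv: "simplicial A U v"
      have vZ: "v \<in> Z" using vC CT T_def by auto
      have out: "\<And>y. y \<in> Z \<Longrightarrow> y \<notin> U \<Longrightarrow> A v y \<le> m"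
      proof -
        fix y assume yZ: "y \<in> Z" and yU: "y \<notin> U"
        show "A v y \<le> m"
        proof (cases "y \<in> S")
          case True
          then have "y \<notin> N" using yU U_def by auto
          then show ?thesis using True vC unfolding N_def by auto
        next
          case False
          then have "y \<in> T" using yZ T_def by auto
          moreover have "y \<notin> C" using yU U_def by auto
          ultimately show ?thesis using Cclos vC by force
        qed
      qed
      show "simplicial A Z v" unfolding simplicial_def
      proof (intro conjI ballI impI)
        show "v \<in> Z" by fact
        fix y z assume y: "y \<in> Z - {v}" and z: "z \<in> Z - {v}" and yz: "y \<noteq> z"
        show "min (A v y) (A v z) \<le> A y z"
        proof (cases "y \<in> U \<and> z \<in> U")
          case True
          then show ?thesis using sv y z yz unfolding simplicial_def by auto
        next
          case False
          then have "min (A v y) (A v z) \<le> m" using out y z by (meson DiffD1 min.coboundedI1 min.coboundedI2 order_trans)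
          moreover have "m \<le> A y z" using mle y z yz by auto
          ultimately show ?thesis by linarith
        qed
      qed
    qed
    have troot: "\<And>W. weighted_chordless A U W \<Longrightarrow> rooted_in U N W \<Longrightarrow>
        weighted_chordless A Z W \<and> rooted_in Z S W"
    proof -
      fix W assume a: "weighted_chordless A U W" and b: "rooted_in U N W"
      have "weighted_chordless A Z W" using a UZ unfolding weighted_chordless_def walk_in_def by auto
      moreover have "rooted_in Z S W" using b NS UN CT T_def unfolding rooted_in_def by auto
      ultimately show "weighted_chordless A Z W \<and> rooted_in Z S W" by simp
    qed
    show ?thesis
    proof (cases "U = Z")
      case False
      then have lt: "card U < card Z" using UZ fin by (simp add: psubset_card_mono psubset_eq)
      have r: "(\<exists>v\<in>U - N. simplicial A U v) \<or> (\<exists>W. weighted_chordless A U W \<and> rooted_in U N W)"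
      proof (rule less.hyps[OF lt])
        show "finite U" using UZ fin finite_subset by blast
        show "\<forall>V. V \<subseteq> U \<and> 2 \<le> card V \<longrightarrow> propA A V \<or> propB A V" using HH UZ by blast
        show "\<forall>x\<in>U. \<forall>y\<in>U. A x y = A y x" using sym UZ by blast
        show "N \<subseteq> U" unfolding U_def by auto
        show "U - N \<noteq> {}" using UN w0C by auto
      qed
      then show ?thesis
      proof
        assume "\<exists>v\<in>U - N. simplicial A U v"
        then obtain v where "v \<in> C" "simplicial A U v" using UN by auto
        then show ?thesis using tsimp CT T_def by blast
      next
        assume "\<exists>W. weighted_chordless A U W \<and> rooted_in U N W"
        then show ?thesis using troot by blast
      qed
    next
      case True
      have SN: "S \<subseteq> N" using True SZ NS CT T_def unfolding U_def by auto
      have path: "\<And>s t. s \<in> S \<Longrightarrow> t \<in> S \<Longrightarrow> A s t \<le> m \<Longrightarrow>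
          \<exists>W. weighted_chordless A Z W \<and> rooted_in Z S W"
      proof -
        fix s t assume sS: "s \<in> S" and tS: "t \<in> S" and st: "A s t \<le> m"
        obtain c1 where c1: "c1 \<in> C" "m < A c1 s" using sS SN N_def by auto
        obtain c2 where c2: "c2 \<in> C" "m < A c2 t" using tS SN N_def by auto
        have "E\<^sup>*\<^sup>* c1 w0" using c1 rtp_sym[of E w0 c1] Esym unfolding C_def by blast
        moreover have "E\<^sup>*\<^sup>* w0 c2" using c2 unfolding C_def by simp
        ultimately have "E\<^sup>*\<^sup>* c1 c2" by simp
        then obtain P where P: "P \<noteq> []" "hd P = c1" "last P = c2" "set P \<subseteq> T"
          "successively (\<lambda>a b. m < A a b) P"
          using rtp_path[of E c1 c2 T m A] Ereach c1 CT by blast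
        have c1Z: "c1 \<in> Z" and c2Z: "c2 \<in> Z" using c1 c2 CT T_def by auto
        have sZ: "s \<in> Z" and tZ: "t \<in> Z" using sS tS SZ by auto
        have e1: "m < A s c1" using c1 sym c1Z sZ by auto
        define Q where "Q = s # P @ [t]"
        have "successively (\<lambda>a b. m < A a b) Q"
          unfolding Q_def using P e1 c2 by (auto simp: successively_append_iff successively_Cons)
        moreover have "set Q \<subseteq> Z" unfolding Q_def using P sZ tZ T_def by auto
        moreover have "length Q \<ge> 2" unfolding Q_def by simp
        moreover have "hd Q \<in> S" "last Q \<in> S" unfolding Q_def using sS tS by auto
        moreover have "internal Q \<subseteq> Z - S" unfolding Q_def internal_def using P T_def by auto
        moreover have "A (hd Q) (last Q) \<le> m" unfolding Q_def using st by simp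
        ultimately show "\<exists>W. weighted_chordless A Z W \<and> rooted_in Z S W"
          using path_rooted[OF sym] by blast
      qed
      have "propA A Z \<or> propB A Z" using HH c2 by blast
      then show ?thesis
      proof
        assume "propB A Z"
        then obtain u v where uv: "u \<noteq> v" "simplicial A Z u" "simplicial A Z v" "A u v = m"
          unfolding propB_def m_def by blast
        have "u \<in> Z" "v \<in> Z" using uv unfolding simplicial_def by auto
        then show ?thesis using uv path by fastforce
      next
        assume "propA A Z"
        then obtain W where W: "critical_walk A Z W" unfolding propA_def by blast
        then have wc: "weighted_chordless A Z W" and cl: "hd W = last W"
          and sh: "simplicial A Z (hd W)" and ex: "\<exists>u\<in>internal W. A (hd W) u = m"
          unfolding critical_walk_def closed_walk_def m_def by auto
        then obtain u where u: "u \<in> internal W" "A (hd W) u = m" by blast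
        have hZ: "hd W \<in> Z" using sh unfolding simplicial_def by simp
        have setW: "set W \<subseteq> Z" and Wne: "W \<noteq> []" using wc unfolding weighted_chordless_def walk_in_def by auto
        have uW: "u \<in> set W" using u(1) internal_sub[of W] by blast
        show ?thesis
        proof (cases "hd W \<in> S")
          case False
          then show ?thesis using sh hZ by blast
        next
          case hS: True
          show ?thesis
          proof (cases "u \<in> S")
            case True
            then show ?thesis using path[OF hS True] u by simp
          next
            case False
            have "chl A W" using wc wc_iff by blast
            then show ?thesis using seg[of A W Z S u] setW Wne hS cl uW False by simp
          qed
        qed
      qed
    qed
  qed
qed

theorem lemma9:
  fixes A :: "'a \<Rightarrow> 'a \<Rightarrow> real" and V X Y :: "'a set"
  assumes "finite V" and "card V \<ge> 2"
    and "\<forall>x \<in> V. \<forall>y \<in> V. A x y = A y x"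
    and "separation A V X Y"
    and "\<forall>Z \<in> {X, Y}. propP A V X Y Z"
    and "\<forall>U. U \<subset> V \<and> card U \<ge> 2 \<longrightarrow> propA A U \<or> propB A U"
  shows "\<forall>Z \<in> {X, Y}. (\<exists>v \<in> Z - (X \<inter> Y). simplicial A Z v) \<or>
           (\<exists>W. weighted_chordless A Z W \<and> rooted_in Z (X \<inter> Y) W)"
proof
  fix Z assume Z: "Z \<in> {X, Y}"
  have sep: "X \<subseteq> V" "Y \<subseteq> V" "X - Y \<noteq> {}" "Y - X \<noteq> {}"
    using assms(4) unfolding separation_def by auto
  have ZV: "Z \<subseteq> V" using Z sep by auto
  have pV: "Z \<subset> V" using Z sep by auto
  show "(\<exists>v \<in> Z - (X \<inter> Y). simplicial A Z v) \<or>
           (\<exists>W. weighted_chordless A Z W \<and> rooted_in Z (X \<inter> Y) W)"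
  proof (rule main)
    show "finite Z" using ZV assms(1) finite_subset by blast
    show "\<forall>U. U \<subseteq> Z \<and> 2 \<le> card U \<longrightarrow> propA A U \<or> propB A U"
      using assms(6) pV by (meson order_le_less_trans)
    show "\<forall>x\<in>Z. \<forall>y\<in>Z. A x y = A y x" using assms(3) ZV by blast
    show "X \<inter> Y \<subseteq> Z" using Z by auto
    show "Z - X \<inter> Y \<noteq> {}" using Z sep by auto
  qed
qed

end
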